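(* Let $k\geq 1$ be an integer. For every integer $n$ with $2^{k-1}<n<2^k$, the minimal Colless index satisfies $c_n<2^{k-1}$; i.e. $\max_{n\in(2^{k-1},2^k)}c_n<2^{k-1}$.
   Context: A rooted binary tree with $n\geq 2$ leaves is a rooted tree whose root has degree 2 and all other internal nodes have degree 3; for $n=1$ it is a single node. For an internal node $v$ with children $v_1,v_2$, let $\kappa(v_i)$ be the number of leaves descending from $v_i$ ($1$ if a leaf). The Colless index is $\mathcal{C}(T)=\sum_v|\kappa(v_1)-\kappa(v_2)|$ over internal nodes $v$; $c_n$ is its minimum over all rooted binary trees with $n$ leaves. *)

theory Defs
  imports Main
begin

text \<open>Rooted binary trees (unordered in the paper; ordering of children is irrelevant
for the Colless index).\<close>
datatype btree = Leaf | Node btree btree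

fun leaves :: "btree \<Rightarrow> nat" where
  "leaves Leaf = 1"
| "leaves (Node l r) = leaves l + leaves r"

fun colless :: "btree \<Rightarrow> nat" where
  "colless Leaf = 0"
| "colless (Node l r) = colless l + colless r
     + nat \<bar>int (leaves l) - int (leaves r)\<bar>"

definition min_colless :: "nat \<Rightarrow> nat" where
  "min_colless n = (LEAST c. \<exists>t. leaves t = n \<and> colless t = c)"

end

theory Submission
  imports Defs
begin

function bal :: "nat \<Rightarrow> btree" where
  "bal n = (if n \<le> 1 then Leaf else Node (bal (n - n div 2)) (bal (n div 2)))"
  by auto
termination by (relation "measure id") auto

declare bal.simps[simp del]

lemma bal_small: "n \<le> 1 \<Longrightarrow> bal n = Leaf"
  by (subst bal.simps) simp

lemma bal_node: "n \<ge> 2 \<Longrightarrow> bal n = Node (bal (n - n div 2)) (bal (n div 2))"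
  by (subst bal.simps) simp

lemma bal_leaves: "n \<ge> 1 \<Longrightarrow> leaves (bal n) = n"
proof (induction n rule: less_induct)
  case (less n)
  show ?case
  proof (cases "n \<le> 1")
    case True then show ?thesis using less.prems by (simp add: bal_small)
  next
    case False
    then have "leaves (bal (n - n div 2)) = n - n div 2" "leaves (bal (n div 2)) = n div 2"
      by (auto intro!: less.IH)
    then show ?thesis using False by (simp add: bal_node)
  qed
qed

lemma bal_colless: "n \<ge> 1 \<Longrightarrow> 2 * colless (bal n) + (if even n then 1 else 0) \<le> n - 1"
proof (induction n rule: less_induct)
  case (less n)
  show ?case
  proof (cases "n \<le> 1")
    case True then have "n = 1" using less.prems by simp
    then show ?thesis by (simp add: bal_small)
  next
    case False
    then have n2: "n \<ge> 2" by simp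
    define a where "a = n - n div 2"
    define b where "b = n div 2"
    have ab: "a + b = n" "b \<ge> 1" "a < n" "b < n" unfolding a_def b_def using n2 by auto
    have ev: "even n \<Longrightarrow> a = b" unfolding a_def b_def by auto
    have od: "odd n \<Longrightarrow> a = b + 1" unfolding a_def b_def by presburger
    have A: "2 * colless (bal a) + (if even a then 1 else 0) \<le> a - 1"
      using less.IH[of a] ab by simp
    have B: "2 * colless (bal b) + (if even b then 1 else 0) \<le> b - 1"
      using less.IH[of b] ab by simp
    have La: "leaves (bal a) = a" using ab by (intro bal_leaves) simp
    have Lb: "leaves (bal b) = b" using ab by (intro bal_leaves) simp
    have bn: "bal n = Node (bal a) (bal b)" unfolding a_def b_def using n2 by (rule bal_node)
    show ?thesis
    proof (cases "even n")
      case True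
      then have "a = b" by (rule ev)
      then have C: "colless (bal n) = colless (bal a) + colless (bal b)"
        using bn La Lb by simp
      have x: "2 * colless (bal a) + 1 \<le> b - 1 \<or> 2 * colless (bal a) \<le> b - 1"
        using A \<open>a = b\<close> by auto
      have y: "2 * colless (bal b) \<le> b - 1" using B by (auto split: if_split_asm)
      have "2 * colless (bal a) \<le> b - 1" using x by linarith
      then have "2 * colless (bal n) + 1 \<le> n - 1" using y C ab \<open>a = b\<close> by linarith
      then show ?thesis using True by simp
    next
      case False
      then have ab1: "a = b + 1" by (rule od)
      then have C: "colless (bal n) = colless (bal a) + colless (bal b) + 1"
        using bn La Lb by simp
      have "2 * colless (bal a) + 2 * colless (bal b) + 1 \<le> a - 1 + (b - 1)"
      proof (cases "even b")
        case True
        then have "odd a" using ab1 by simp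
        then have A': "2 * colless (bal a) \<le> a - 1" using A by simp
        have B': "2 * colless (bal b) + 1 \<le> b - 1" using B True by simp
        show ?thesis using A' B' by linarith
      next
        case f: False
        then have "even a" using ab1 by simp
        then have A': "2 * colless (bal a) + 1 \<le> a - 1" using A by simp
        have B': "2 * colless (bal b) \<le> b - 1" using B f by simp
        show ?thesis using A' B' by linarith
      qed
      then have "2 * colless (bal n) \<le> n - 1" using C ab ab1 by linarith
      then show ?thesis using False by simp
    qed
  qed
qed

theorem lemma8:
  fixes k n :: nat
  assumes "k \<ge> 1" and "2 ^ (k - 1) < n" and "n < 2 ^ k"
  shows "min_colless n < 2 ^ (k - 1)"
proof -
  have n1: "n \<ge> 1" using assms(2) by simp
  have "min_colless n \<le> colless (bal n)"
    unfolding min_colless_def by (rule Least_le) (use bal_leaves[OF n1] in auto)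
  moreover have "2 * colless (bal n) \<le> n - 1" using bal_colless[OF n1] by linarith
  moreover have "(2::nat) ^ k = 2 * 2 ^ (k - 1)" using assms(1)
    by (cases k) simp_all
  ultimately show ?thesis using assms(3) by simp
qed

end
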